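(* There exist universal positive constants $\alpha,\beta,\gamma$ such that the following holds. Let $n\ge 2$, $K\in T^n$, $r\in(0,1)$ and $\varepsilon\in(0,1/25)$, and assume that \begin{itemize} \item $rD_n\subseteq K$, and \item $(1-\varepsilon)D_n\subseteq K+2\sqrt{\varepsilon}\,D_n$. \end{itemize} Then there exist a number $N\le \alpha+\beta|\log\varepsilon|+\gamma|\log r|$ and directions $u_1,\dots,u_N\in S^{n-1}$ such that $\tilde K:=M_{u_N}\circ\cdots\circ M_{u_1}(K)$ satisfies \[ (1-4\sqrt{\varepsilon})D_n\subseteq \tilde K . \]
   Context: $D_n$ denotes the closed Euclidean unit ball in $\mathbb R^n$, $S^{n-1}$ the unit sphere, and $+$ the Minkowski sum. A nonempty compact set $K\subset\mathbb R^n$ is called star shaped if $x\in K$ implies that the segment $[0,x]\subseteq K$; $T^n$ denotes the family of star shaped sets in $\mathbb R^n$. For $u\in S^{n-1}$, $R_u$ denotes the reflection with respect to the hyperplane $u^\perp$, and the Minkowski symmetrization of a set $K$ in direction $u$ is $M_u(K)=\frac{K+R_uK}{2}$ ($K$ need not be convex). *)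

theory Defs
  imports "HOL-Analysis.Analysis"
begin

text \<open>Points of R^n are represented as functions nat => real vanishing at
  all indices >= n; this lets the dimension n be quantified inside the
  statement (the constants alpha, beta, gamma must not depend on n).\<close>

type_synonym pt = "nat \<Rightarrow> real"

definition Rn :: "nat \<Rightarrow> pt set" where
  "Rn n = {x. \<forall>i\<ge>n. x i = 0}"

definition vadd :: "pt \<Rightarrow> pt \<Rightarrow> pt" where
  "vadd x y = (\<lambda>i. x i + y i)"

definition vsub :: "pt \<Rightarrow> pt \<Rightarrow> pt" where
  "vsub x y = (\<lambda>i. x i - y i)"

definition smul :: "real \<Rightarrow> pt \<Rightarrow> pt" where
  "smul c x = (\<lambda>i. c * x i)"

definition ip :: "nat \<Rightarrow> pt \<Rightarrow> pt \<Rightarrow> real" where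
  "ip n x y = (\<Sum>i<n. x i * y i)"

definition nrm :: "nat \<Rightarrow> pt \<Rightarrow> real" where
  "nrm n x = sqrt (ip n x x)"

definition Dball :: "nat \<Rightarrow> pt set" where
  "Dball n = {x \<in> Rn n. nrm n x \<le> 1}"

definition Sph :: "nat \<Rightarrow> pt set" where
  "Sph n = {u \<in> Rn n. nrm n u = 1}"

definition dil :: "real \<Rightarrow> pt set \<Rightarrow> pt set" where
  "dil c A = smul c ` A"

definition msum :: "pt set \<Rightarrow> pt set \<Rightarrow> pt set" where
  "msum A B = {vadd a b | a b. a \<in> A \<and> b \<in> B}"

definition compact_Rn :: "nat \<Rightarrow> pt set \<Rightarrow> bool" where
  "compact_Rn n K \<longleftrightarrow> K \<subseteq> Rn n \<and>
     (\<forall>x :: nat \<Rightarrow> pt. (\<forall>k. x k \<in> K) \<longrightarrow>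
        (\<exists>\<phi> y. strict_mono \<phi> \<and> y \<in> K \<and>
               (\<lambda>k. nrm n (vsub (x (\<phi> k)) y)) \<longlonglongrightarrow> 0))"

definition star_shaped :: "nat \<Rightarrow> pt set \<Rightarrow> bool" where
  "star_shaped n K \<longleftrightarrow> K \<noteq> {} \<and> compact_Rn n K \<and>
     (\<forall>x\<in>K. \<forall>t\<in>{0..1}. smul t x \<in> K)"

definition refl :: "nat \<Rightarrow> pt \<Rightarrow> pt \<Rightarrow> pt" where
  "refl n u x = vsub x (smul (2 * ip n x u) u)"

definition Msym :: "nat \<Rightarrow> pt \<Rightarrow> pt set \<Rightarrow> pt set" where
  "Msym n u K = dil (1/2) (msum K (refl n u ` K))"

fun Msyms :: "nat \<Rightarrow> (nat \<Rightarrow> pt) \<Rightarrow> nat \<Rightarrow> pt set \<Rightarrow> pt set" where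
  "Msyms n us 0 K = K"
| "Msyms n us (Suc k) K = Msym n (us k) (Msyms n us k K)"

end

theory Submission imports Defs begin

lemma nrm_L2: "nrm n x = L2_set x {..<n}"
  by (simp add: nrm_def ip_def L2_set_def power2_eq_square)

lemma nrm_nonneg: "0 \<le> nrm n x" by (simp add: nrm_L2)

lemma nrm_tri: "nrm n (vadd x y) \<le> nrm n x + nrm n y"
  unfolding nrm_L2 vadd_def by (rule L2_set_triangle_ineq)

lemma nrm_smul: "nrm n (smul c x) = \<bar>c\<bar> * nrm n x"
proof -
  have "nrm n (smul c x) = L2_set (\<lambda>i. \<bar>c\<bar> * x i) {..<n}"
    unfolding nrm_L2 smul_def L2_set_def by (simp add: power_mult_distrib)
  also have "\<dots> = \<bar>c\<bar> * nrm n x" by (simp add: nrm_L2 L2_set_right_distrib)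
  finally show ?thesis .
qed

lemma nrm_cong: "(\<And>i. i < n \<Longrightarrow> x i = y i) \<Longrightarrow> nrm n x = nrm n y"
  unfolding nrm_L2 by (rule L2_set_cong) auto

definition e0 :: pt where "e0 = (\<lambda>i. if i = 0 then 1 else 0)"
definition R0 :: "pt \<Rightarrow> pt" where "R0 x = (\<lambda>i. if i = 0 then - x 0 else x i)"

lemma refl_e0: "n \<ge> 1 \<Longrightarrow> refl n e0 x = R0 x"
proof -
  assume n: "n \<ge> 1"
  have "ip n x e0 = (\<Sum>i<n. if i = 0 then x 0 else 0)"
    unfolding ip_def e0_def by (rule sum.cong) auto
  also have "\<dots> = x 0" using n by (simp add: sum.delta)
  finally show ?thesis unfolding refl_def R0_def vsub_def smul_def e0_def by auto
qed

lemma R0_R0[simp]: "R0 (R0 x) = x" unfolding R0_def by auto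

lemma nrm_R0[simp]: "nrm n (R0 x) = nrm n x"
  unfolding nrm_L2 L2_set_def R0_def by (rule arg_cong[where f=sqrt], rule sum.cong) auto

lemma R0_Rn: "x \<in> Rn n \<Longrightarrow> R0 x \<in> Rn n" unfolding Rn_def R0_def by auto

lemma e0_Sph: "n \<ge> 1 \<Longrightarrow> e0 \<in> Sph n"
proof -
  assume n: "n \<ge> 1"
  have "ip n e0 e0 = (\<Sum>i<n. if i = 0 then 1 else 0)"
    unfolding ip_def e0_def by (rule sum.cong) auto
  also have "\<dots> = 1" using n by (simp add: sum.delta)
  finally show ?thesis using n unfolding Sph_def Rn_def nrm_def e0_def by auto
qed

lemma ball_char: "\<rho> > 0 \<Longrightarrow> dil \<rho> (Dball n) = {y \<in> Rn n. nrm n y \<le> \<rho>}"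
proof (intro set_eqI iffI)
  fix y assume p: "\<rho> > 0" and "y \<in> dil \<rho> (Dball n)"
  then obtain d where d: "d \<in> Rn n" "nrm n d \<le> 1" "y = smul \<rho> d"
    unfolding dil_def Dball_def by auto
  have "nrm n y = \<rho> * nrm n d" using d p by (simp add: nrm_smul)
  also have "\<dots> \<le> \<rho>" using d p by (simp add: mult_left_le)
  finally show "y \<in> {y \<in> Rn n. nrm n y \<le> \<rho>}" using d
    by (auto simp: Rn_def smul_def)
next
  fix y assume p: "\<rho> > 0" and y: "y \<in> {y \<in> Rn n. nrm n y \<le> \<rho>}"
  let ?d = "smul (1/\<rho>) y"
  have "nrm n ?d = nrm n y / \<rho>" using p by (simp add: nrm_smul)
  also have "\<dots> \<le> 1" using y p by simp
  finally have "?d \<in> Dball n" using y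
    by (auto simp: Dball_def Rn_def smul_def)
  moreover have "y = smul \<rho> ?d" using p by (auto simp: smul_def)
  ultimately show "y \<in> dil \<rho> (Dball n)" unfolding dil_def by blast
qed

definition M0 :: "pt set \<Rightarrow> pt set" where
  "M0 L = {smul (1/2) (vadd a (R0 b)) | a b. a \<in> L \<and> b \<in> L}"

lemma Msym_e0: "n \<ge> 1 \<Longrightarrow> Msym n e0 L = M0 L"
  unfolding Msym_def dil_def msum_def M0_def by (auto simp: refl_e0)

lemma step_ball:
  assumes L: "L \<subseteq> Rn n" and B: "\<forall>y\<in>Rn n. nrm n y \<le> \<rho> \<longrightarrow> y \<in> L"
    and N: "\<forall>y\<in>Rn n. nrm n y \<le> s \<longrightarrow> (\<exists>a\<in>L. nrm n (vsub y a) \<le> c * nrm n y)"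
    and c: "c \<ge> 0" and mu: "0 \<le> \<mu>" "\<mu> \<le> 2" "\<mu> * \<rho>' \<le> s" "(2 - \<mu> + c*\<mu>) * \<rho>' \<le> \<rho>"
  shows "\<forall>x\<in>Rn n. nrm n x \<le> \<rho>' \<longrightarrow> x \<in> M0 L"
proof (intro ballI impI)
  fix x assume x: "x \<in> Rn n" "nrm n x \<le> \<rho>'"
  define y where "y = smul \<mu> x"
  have ny: "nrm n y = \<mu> * nrm n x" using mu by (simp add: y_def nrm_smul)
  have "nrm n y \<le> \<mu> * \<rho>'" unfolding ny using x mu by (simp add: mult_left_mono)
  hence "nrm n y \<le> s" using mu by simp
  moreover have "y \<in> Rn n" using x by (simp add: y_def Rn_def smul_def)
  ultimately obtain a where a: "a \<in> L" "nrm n (vsub y a) \<le> c * nrm n y" using N by blast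
  define w where "w = vsub (smul 2 x) a"
  have weq: "w = vadd (smul (2-\<mu>) x) (vsub y a)"
    unfolding w_def y_def vadd_def vsub_def smul_def by (auto simp: algebra_simps)
  have "nrm n w \<le> (2-\<mu>) * nrm n x + c * (\<mu> * nrm n x)"
    unfolding weq using nrm_tri[of n "smul (2-\<mu>) x" "vsub y a"] a mu ny by (simp add: nrm_smul)
  also have "\<dots> = (2 - \<mu> + c*\<mu>) * nrm n x" by (simp add: algebra_simps)
  also have "\<dots> \<le> (2 - \<mu> + c*\<mu>) * \<rho>'" using x mu c by (intro mult_left_mono) auto
  finally have nw: "nrm n w \<le> \<rho>" using mu by simp
  have "a \<in> Rn n" using a L by auto
  hence "w \<in> Rn n" using x by (simp add: w_def Rn_def smul_def vsub_def)
  hence "R0 w \<in> L" using B nw by (simp add: R0_Rn)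
  moreover have "x = smul (1/2) (vadd a (R0 (R0 w)))"
    by (simp add: w_def smul_def vadd_def vsub_def)
  ultimately show "x \<in> M0 L" unfolding M0_def using a by blast
qed

lemma step_net:
  assumes N: "\<forall>y\<in>Rn n. nrm n y \<le> s \<longrightarrow> (\<exists>a\<in>L. nrm n (vsub y a) \<le> c * nrm n y)"
  shows "\<forall>y\<in>Rn n. nrm n y \<le> s \<longrightarrow> (\<exists>a\<in>M0 L. nrm n (vsub y a) \<le> c * nrm n y)"
proof (intro ballI impI)
  fix y assume y: "y \<in> Rn n" "nrm n y \<le> s"
  obtain a where a: "a \<in> L" "nrm n (vsub y a) \<le> c * nrm n y" using N y by blast
  obtain b where b: "b \<in> L" "nrm n (vsub (R0 y) b) \<le> c * nrm n y"
    using N y R0_Rn[of y n] by auto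
  define x where "x = smul (1/2) (vadd a (R0 b))"
  have "x \<in> M0 L" unfolding M0_def x_def using a b by blast
  moreover have "vsub y x = smul (1/2) (vadd (vsub y a) (R0 (vsub (R0 y) b)))"
    unfolding x_def R0_def smul_def vadd_def vsub_def by (rule ext) (auto simp: field_simps)
  hence "nrm n (vsub y x) \<le> (1/2) * (c * nrm n y + c * nrm n y)"
    using nrm_tri[of n "vsub y a" "R0 (vsub (R0 y) b)"] a b by (simp add: nrm_smul)
  ultimately show "\<exists>a\<in>M0 L. nrm n (vsub y a) \<le> c * nrm n y" by auto
qed

lemma step_sub: assumes "L \<subseteq> Rn n" shows "M0 L \<subseteq> Rn n"
proof
  fix x assume "x \<in> M0 L"
  then obtain a b where ab: "a \<in> L" "b \<in> L" "x = smul (1/2) (vadd a (R0 b))"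
    unfolding M0_def by blast
  have "a \<in> Rn n" "b \<in> Rn n" using ab assms by auto
  have "R0 b \<in> Rn n" using \<open>b \<in> Rn n\<close> by (rule R0_Rn)
  with \<open>a \<in> Rn n\<close> show "x \<in> Rn n" using ab by (simp add: Rn_def smul_def vadd_def)
qed

lemma init_net:
  assumes st: "\<forall>x\<in>K. \<forall>t\<in>{0..1}. smul t x \<in> K" and z: "(\<lambda>i. 0) \<in> K"
    and s: "s > 0" and d: "\<delta> > 0" and H: "dil s (Dball n) \<subseteq> msum K (dil \<delta> (Dball n))"
  shows "\<forall>y\<in>Rn n. nrm n y \<le> s \<longrightarrow> (\<exists>a\<in>K. nrm n (vsub y a) \<le> (\<delta>/s) * nrm n y)"
proof (intro ballI impI)
  fix y assume y: "y \<in> Rn n" "nrm n y \<le> s"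
  show "\<exists>a\<in>K. nrm n (vsub y a) \<le> (\<delta>/s) * nrm n y"
  proof (cases "nrm n y = 0")
    case True
    have "vsub y (\<lambda>i. 0) = y" by (simp add: vsub_def)
    then show ?thesis using z True by (intro bexI[of _ "\<lambda>i. 0"]) auto
  next
    case False
    hence pos: "nrm n y > 0" using nrm_nonneg[of n y] by linarith
    define t where "t = nrm n y / s"
    have t: "0 < t" "t \<le> 1" using pos s y by (auto simp: t_def)
    define w where "w = smul (1/t) y"
    have "nrm n w = nrm n y / t" using t by (simp add: w_def nrm_smul)
    also have "\<dots> = s" using pos s by (simp add: t_def)
    finally have nw: "nrm n w = s" .
    have "w \<in> Rn n" using y by (simp add: w_def Rn_def smul_def)
    hence "w \<in> dil s (Dball n)" using nw s by (simp add: ball_char)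
    hence "w \<in> msum K (dil \<delta> (Dball n))" using H by blast
    then obtain k e where ke: "k \<in> K" "e \<in> dil \<delta> (Dball n)" "w = vadd k e"
      unfolding msum_def by blast
    have ne: "nrm n e \<le> \<delta>" using ke d by (simp add: ball_char)
    have "smul t k \<in> K" using st ke t by auto
    moreover have "vsub y (smul t k) = smul t e"
      using ke(3) t unfolding w_def smul_def vadd_def vsub_def
      by (rule_tac ext) (drule_tac x=i in fun_cong, auto simp: field_simps)
    hence "nrm n (vsub y (smul t k)) = t * nrm n e" using t by (simp add: nrm_smul)
    moreover have "t * nrm n e \<le> t * \<delta>" using ne t by (simp add: mult_left_mono)
    moreover have "t * \<delta> = (\<delta>/s) * nrm n y" by (simp add: t_def)
    ultimately show ?thesis by (intro bexI[of _ "smul t k"]) auto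
  qed
qed

lemma ln65: "ln (6/5::real) \<ge> 1/6"
proof -
  have "ln (5/6::real) \<le> 5/6 - 1" by (rule ln_le_minus_one) simp
  moreover have "ln (6/5::real) = - ln (5/6)" by (simp add: ln_div)
  ultimately show ?thesis by simp
qed

lemma ln2h: "ln (2::real) \<ge> 1/2"
proof -
  have "ln (1/2::real) \<le> 1/2 - 1" by (rule ln_le_minus_one) simp
  moreover have "ln (2::real) = - ln (1/2)" by (simp add: ln_div)
  ultimately show ?thesis by simp
qed

lemma pow_exp: "(a::real) > 0 \<Longrightarrow> a ^ m = exp (real m * ln a)"
  by (simp add: exp_of_nat_mult[symmetric] ln_realpow[symmetric] ) 

lemma mu_aux: "(p::real) > 0 \<Longrightarrow> s > 0 \<Longrightarrow> s/2 \<le> p \<Longrightarrow> 0 \<le> s/p \<and> s/p \<le> 2 \<and> s/p*p \<le> s"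
  by (auto simp: divide_le_eq)

lemma alg_aux: "(2 - m + c*m) * (p::real) = 2*p - m*p + c*(m*p)" by algebra

lemma lin_aux: "(A::real) = 2 * (s - d - x) - s + c * s \<Longrightarrow> x * 2 = y \<Longrightarrow> c * s = d \<Longrightarrow> A \<le> s - d - y"
  by (simp add: algebra_simps)

lemma Msyms_e0: "n \<ge> 1 \<Longrightarrow> Msyms n (\<lambda>_. e0) (Suc k) K = M0 (Msyms n (\<lambda>_. e0) k K)"
  by (simp add: Msym_e0)

theorem lemma2p3:
  shows "\<exists>\<alpha> \<beta> \<gamma> :: real. \<alpha> > 0 \<and> \<beta> > 0 \<and> \<gamma> > 0 \<and>
    (\<forall>n K r \<epsilon>. n \<ge> 2 \<longrightarrow> star_shaped n K \<longrightarrow> 0 < r \<longrightarrow> r < 1 \<longrightarrow>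
       0 < \<epsilon> \<longrightarrow> \<epsilon> < 1/25 \<longrightarrow>
       dil r (Dball n) \<subseteq> K \<longrightarrow>
       dil (1 - \<epsilon>) (Dball n) \<subseteq> msum K (dil (2 * sqrt \<epsilon>) (Dball n)) \<longrightarrow>
       (\<exists>N us. real N \<le> \<alpha> + \<beta> * \<bar>ln \<epsilon>\<bar> + \<gamma> * \<bar>ln r\<bar> \<and>
          (\<forall>i<N. us i \<in> Sph n) \<and>
          dil (1 - 4 * sqrt \<epsilon>) (Dball n) \<subseteq> Msyms n us N K))"
proof (rule exI[of _ "2::real"], rule exI[of _ "1::real"], rule exI[of _ "6::real"], intro conjI allI impI)
  fix n K r \<epsilon>
  assume n2: "n \<ge> (2::nat)" and st: "star_shaped n K" and r: "0 < r" "r < 1"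
    and e: "0 < \<epsilon>" "\<epsilon> < 1/25" and Hr: "dil r (Dball n) \<subseteq> K"
    and Hn: "dil (1 - \<epsilon>) (Dball n) \<subseteq> msum K (dil (2 * sqrt \<epsilon>) (Dball n))"
  have n1: "n \<ge> 1" using n2 by simp
  define q where "q = sqrt \<epsilon>"
  have q0: "q > 0" using e by (simp add: q_def)
  have eq: "\<epsilon> = q^2" using e by (simp add: q_def)
  have q5: "q < 1/5"
  proof (rule ccontr)
    assume "\<not> q < 1/5"
    hence "(1/5)^2 \<le> q^2" by (intro power_mono) auto
    hence "1/25 \<le> q^2" by (simp add: power_divide)
    thus False using e eq by simp
  qed
  define s where "s = 1 - \<epsilon>"
  define \<delta> where "\<delta> = 2 * q"
  define c where "c = \<delta> / s"
  have s0: "s > 24/25" using e by (simp add: s_def)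
  have d0: "\<delta> > 0" "\<delta> < 2/5" using q0 q5 by (auto simp: \<delta>_def)
  have cs: "c * s = \<delta>" using s0 by (simp add: c_def)
  have c0: "c \<ge> 0" using s0 d0 by (simp add: c_def)
  have c5: "c \<le> 5/12"
  proof -
    have "q^2 \<le> q * (1/5)" unfolding power2_eq_square using q5 q0
      by (intro mult_left_mono) auto
    hence "24 * q + 5 * q^2 \<le> 5" using q5 by linarith
    hence "\<delta> * 12 \<le> 5 * s" by (simp add: \<delta>_def s_def eq)
    thus ?thesis using s0 by (simp add: c_def divide_le_eq)
  qed
  define Ls where "Ls k = Msyms n (\<lambda>_. e0) k K" for k
  have LsS: "Ls (Suc k) = M0 (Ls k)" for k using n1 by (simp add: Ls_def Msym_e0)
  have Ksub: "K \<subseteq> Rn n" using st by (simp add: star_shaped_def compact_Rn_def)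
  have Kball: "\<forall>y\<in>Rn n. nrm n y \<le> r \<longrightarrow> y \<in> K" using Hr r by (auto simp: ball_char)
  have z: "(\<lambda>i. 0) \<in> K" using Kball r by (auto simp: Rn_def nrm_def ip_def)
  have Knet: "\<forall>y\<in>Rn n. nrm n y \<le> s \<longrightarrow> (\<exists>a\<in>K. nrm n (vsub y a) \<le> c * nrm n y)"
    unfolding c_def
    by (rule init_net) (use st z s0 d0 Hn in \<open>auto simp: star_shaped_def s_def \<delta>_def q_def\<close>)
  have inv: "Ls k \<subseteq> Rn n \<and> (\<forall>y\<in>Rn n. nrm n y \<le> s \<longrightarrow> (\<exists>a\<in>Ls k. nrm n (vsub y a) \<le> c * nrm n y))" for k
  proof (induction k)
    case 0 then show ?case using Ksub Knet by (simp add: Ls_def)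
  next
    case (Suc k) then show ?case unfolding LsS using step_sub step_net by blast
  qed
  have ph1: "\<forall>y\<in>Rn n. nrm n y \<le> min (s/2) ((6/5)^k * r) \<longrightarrow> y \<in> Ls k" for k
  proof (induction k)
    case 0 then show ?case using Kball by (auto simp: Ls_def)
  next
    case (Suc k)
    let ?p = "min (s/2) ((6/5)^k * r)" and ?p' = "min (s/2) ((6/5)^Suc k * r)"
    have "(2 - 2 + c*2) * ?p' \<le> (5/6) * ?p'"
      using c5 r s0 by (intro mult_right_mono) auto
    also have "\<dots> \<le> ?p" using s0 r by (auto simp: min_def)
    finally have "(2 - 2 + c*2) * ?p' \<le> ?p" .
    then show ?case unfolding LsS
      using step_ball[of "Ls k" n ?p s c 2 ?p'] inv[of k] Suc c0 by auto
  qed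
  define N1 where "N1 = nat \<lceil>6 * \<bar>ln r\<bar>\<rceil>"
  define N2 where "N2 = nat \<lceil>\<bar>ln \<epsilon>\<bar>\<rceil>"
  have N1r: "real N1 \<ge> 6 * \<bar>ln r\<bar>" "real N1 \<le> 6 * \<bar>ln r\<bar> + 1" unfolding N1_def
    by (auto simp: of_nat_nat)
  have N2r: "real N2 \<ge> \<bar>ln \<epsilon>\<bar>" "real N2 \<le> \<bar>ln \<epsilon>\<bar> + 1" unfolding N2_def
    by (auto simp: of_nat_nat)
  have "(6/5::real)^N1 = exp (real N1 * ln (6/5))" by (rule pow_exp) simp
  also have "\<dots> \<ge> exp (- ln r)"
  proof -
    have "real N1 * ln (6/5) \<ge> real N1 * (1/6)" using ln65 by (intro mult_left_mono) auto
    thus ?thesis using N1r by (intro exp_le_cancel_iff[THEN iffD2]) auto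
  qed
  finally have "(6/5::real)^N1 \<ge> 1/r" using r by (simp add: exp_minus exp_ln inverse_eq_divide)
  hence p1: "(6/5::real)^N1 * r \<ge> 1" using r by (simp add: divide_le_eq)
  have "(2::real)^N2 = exp (real N2 * ln 2)" by (rule pow_exp) simp
  also have "\<dots> \<ge> exp (- ln q)"
  proof -
    have "real N2 * ln 2 \<ge> real N2 * (1/2)" using ln2h by (intro mult_left_mono) auto
    moreover have "ln q = ln \<epsilon> / 2" unfolding q_def using e by (intro ln_sqrt) simp
    ultimately show ?thesis using N2r by (intro exp_le_cancel_iff[THEN iffD2]) auto
  qed
  finally have "(2::real)^N2 \<ge> 1/q" using q0 by (simp add: exp_minus exp_ln inverse_eq_divide)
  hence p2: "1 / (2::real)^N2 \<le> q" using q0 by (simp add: divide_le_eq mult.commute)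
  have b1: "\<forall>y\<in>Rn n. nrm n y \<le> s/2 \<longrightarrow> y \<in> Ls N1"
  proof -
    have "min (s/2) ((6/5)^N1 * r) = s/2" using p1 e by (auto simp: min_def s_def)
    thus ?thesis using ph1[of N1] by simp
  qed
  define G where "G = s/2 - \<delta>"
  have G0: "G > 0" "G \<le> 1/2" using s0 d0 e unfolding G_def s_def by (simp_all add: field_simps)
  have ph2: "\<forall>y\<in>Rn n. nrm n y \<le> s - \<delta> - G / 2^j \<longrightarrow> y \<in> Ls (N1 + j)" for j
  proof (induction j)
    case 0 then show ?case using b1 by (simp add: G_def)
  next
    case (Suc j)
    let ?p = "s - \<delta> - G / 2^j" and ?p' = "s - \<delta> - G / 2^Suc j"
    have "(1::real) \<le> 2^Suc j" by (rule one_le_power) simp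
    hence "G / 2^Suc j \<le> G" using G0 by (simp add: divide_le_eq)
    hence "?p' \<ge> s - \<delta> - G" by linarith
    hence pp: "?p' \<ge> s/2" unfolding G_def by linarith
    define \<mu> where "\<mu> = s / ?p'"
    have pp0: "?p' > 0" using pp s0 by linarith
    have mu: "0 \<le> \<mu>" "\<mu> \<le> 2" "\<mu> * ?p' \<le> s"
      unfolding \<mu>_def using mu_aux[OF pp0, of s] s0 pp by auto
    have ms: "\<mu> * ?p' = s" unfolding \<mu>_def using pp0 by simp
    have "(2 - \<mu> + c*\<mu>) * ?p' = 2 * ?p' - s + c * s"
      by (simp only: alg_aux ms)
    moreover have h: "G / 2^Suc j * 2 = G / 2^j" by simp
    ultimately have "(2 - \<mu> + c*\<mu>) * ?p' \<le> ?p" using cs by (rule lin_aux)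
    then show ?case
      using step_ball[of "Ls (N1+j)" n ?p s c \<mu> ?p'] inv[of "N1+j"] Suc c0 mu
      by (simp add: LsS)
  qed
  have fin: "s - \<delta> - G / 2^N2 \<ge> 1 - 4 * q"
  proof -
    have "G / 2^N2 = G * (1/2^N2)" by simp
    also have "\<dots> \<le> (1/2) * q" using G0 p2 by (intro mult_mono) auto
    finally have X: "G / 2^N2 \<le> (1/2) * q" .
    moreover have "q^2 \<le> q" using q0 q5 by (simp add: power2_eq_square)
    moreover have "s - \<delta> = 1 - q^2 - 2*q" by (simp add: s_def \<delta>_def eq)
    ultimately show ?thesis using q0 by linarith
  qed
  show "\<exists>N us. real N \<le> 2 + 1 * \<bar>ln \<epsilon>\<bar> + 6 * \<bar>ln r\<bar> \<and>
          (\<forall>i<N. us i \<in> Sph n) \<and>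
          dil (1 - 4 * sqrt \<epsilon>) (Dball n) \<subseteq> Msyms n us N K"
  proof (rule exI[of _ "N1 + N2"], rule exI[of _ "\<lambda>_. e0"], intro conjI)
    show "real (N1 + N2) \<le> 2 + 1 * \<bar>ln \<epsilon>\<bar> + 6 * \<bar>ln r\<bar>" using N1r N2r by simp
    show "\<forall>i<N1 + N2. e0 \<in> Sph n" using e0_Sph n1 by auto
    have "1 - 4 * q > 0" using q5 by simp
    then show "dil (1 - 4 * sqrt \<epsilon>) (Dball n) \<subseteq> Msyms n (\<lambda>_. e0) (N1 + N2) K"
      using ph2[of N2] fin unfolding Ls_def q_def[symmetric] by (auto simp: ball_char)
  qed
qed simp_all

end
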